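(* Let $S$ be a finite set and let $\mathcal{I}\subseteq 2^S$ be a downset of the Boolean lattice $(2^S,\subseteq)$ (i.e., $Y\subseteq X\in\mathcal{I}$ implies $Y\in\mathcal{I}$). Suppose that there exists $Z\in\mathcal{I}$ with $\hat\mu_{\mathcal{I}}(Z)=0$, and fix such a $Z$. Then $$\mathcal{I}\in \bullet\big(\{\,2^X \mid X\in \mathcal{I}\setminus\{Z\}\,\}\big),$$ where $2^X=\{Y\subseteq S\mid Y\subseteq X\}$ is the principal downset generated by $X$.
   Context: For a finite set $S$ and a configuration $\mathcal{C}\subseteq 2^S$, the generalized Möbius function $\hat\mu_{\mathcal{C}}:2^S\to\mathbb{Z}$ is defined by top-down induction: $\hat\mu_{\mathcal{C}}(X)=[X\in\mathcal{C}]-\sum_{X\subsetneq X'\subseteq S}\hat\mu_{\mathcal{C}}(X')$, where $[X\in\mathcal{C}]$ is $1$ if $X\in\mathcal{C}$ and $0$ otherwise. For sets $A,B$, the disjoint union $A\,\dot\cup\, B$ is $A\cup B$ and is defined only when $A\cap B=\emptyset$; the subset complement $A\,\dot\setminus\, B$ is $A\setminus B$ and is defined only when $B\subseteq A$. For a finite family $\mathcal{F}$ of sets, the partial dot-algebra $\bullet(\mathcal{F})$ is the smallest family of sets that contains $\emptyset$ and every member of $\mathcal{F}$ and is closed under all well-defined disjoint unions and subset complements of its members. Here the members of $\mathcal{F}$ are themselves sets of subsets of $S$, so $\bullet(\mathcal{F})$ consists of subsets of $2^S$. *)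

theory Defs
  imports Main
begin

text \<open>Values outside Pow S are set to 0.\<close>

function gen_mobius :: "'a set \<Rightarrow> 'a set set \<Rightarrow> 'a set \<Rightarrow> int" where
  "gen_mobius S C X =
     (if finite S \<and> X \<subseteq> S then
        (if X \<in> C then 1 else 0)
        - (\<Sum>X' \<in> {X'. X \<subset> X' \<and> X' \<subseteq> S}. gen_mobius S C X')
      else 0)"
  by auto
termination
proof (relation "measure (\<lambda>(S, C, X). card (S - X))")
  show "wf (measure (\<lambda>(S, C, X). card (S - X)))" by simp
next
  fix S :: "'a set" and C X X'
  assume a: "finite S \<and> X \<subseteq> S" and b: "X' \<in> {X'. X \<subset> X' \<and> X' \<subseteq> S}"
  then have "S - X' \<subset> S - X" by blast
  then show "((S, C, X'), (S, C, X)) \<in> measure (\<lambda>(S, C, X). card (S - X))"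
    using a by (simp add: psubset_card_mono)
qed

declare gen_mobius.simps [simp del]

inductive_set dot_algebra :: "'b set set \<Rightarrow> 'b set set" for F :: "'b set set" where
  empty: "{} \<in> dot_algebra F"
| gen: "A \<in> F \<Longrightarrow> A \<in> dot_algebra F"
| disj_union: "A \<in> dot_algebra F \<Longrightarrow> B \<in> dot_algebra F \<Longrightarrow> A \<inter> B = {} \<Longrightarrow> A \<union> B \<in> dot_algebra F"
| subset_diff: "A \<in> dot_algebra F \<Longrightarrow> B \<in> dot_algebra F \<Longrightarrow> B \<subseteq> A \<Longrightarrow> A - B \<in> dot_algebra F"

end

theory Submission
  imports Defs
begin

lemma mob_formula:
  assumes "finite S" "X \<subseteq> S"
  shows "gen_mobius S C X = (\<Sum>X'\<in>{X'. X \<subseteq> X' \<and> X' \<subseteq> S}. if X' \<in> C then (-1::int)^(card X' + card X) else 0)"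
  using assms
proof (induction S C X rule: gen_mobius.induct)
  case (1 S C X)
  define A where "A = {X'. X \<subset> X' \<and> X' \<subseteq> S}"
  have finA: "finite A" unfolding A_def
    by (rule finite_subset[of _ "Pow S"]) (use 1 in auto)
  have IH: "gen_mobius S C X' = (\<Sum>X''\<in>{X''. X'' \<in> A \<and> X' \<subseteq> X''}. if X'' \<in> C then (-1::int)^(card X'' + card X') else 0)"
    if "X' \<in> A" for X'
  proof -
    have "{X''. X' \<subseteq> X'' \<and> X'' \<subseteq> S} = {X''. X'' \<in> A \<and> X' \<subseteq> X''}"
      using that unfolding A_def by auto
    moreover have "gen_mobius S C X' = (\<Sum>X''\<in>{X''. X' \<subseteq> X'' \<and> X'' \<subseteq> S}. if X'' \<in> C then (-1::int)^(card X'' + card X') else 0)"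
      using 1 that unfolding A_def by auto
    ultimately show ?thesis by simp
  qed
  have "gen_mobius S C X = (if X \<in> C then 1 else 0) - (\<Sum>X'\<in>A. gen_mobius S C X')"
    by (subst gen_mobius.simps) (simp add: 1 A_def)
  also have "(\<Sum>X'\<in>A. gen_mobius S C X') = (\<Sum>X'\<in>A. \<Sum>X''\<in>{X''. X'' \<in> A \<and> X' \<subseteq> X''}. if X'' \<in> C then (-1::int)^(card X'' + card X') else 0)"
    by (rule sum.cong) (simp_all add: IH)
  also have "\<dots> = (\<Sum>X''\<in>A. \<Sum>X'\<in>{X'. X' \<in> A \<and> X' \<subseteq> X''}. if X'' \<in> C then (-1::int)^(card X'' + card X') else 0)"
    by (rule sum.swap_restrict[OF finA finA])
  also have "\<dots> = (\<Sum>X''\<in>A. - (if X'' \<in> C then (-1::int)^(card X'' + card X) else 0))"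
  proof (rule sum.cong[OF refl])
    fix X'' assume X'': "X'' \<in> A"
    have fX'': "finite X''" using X'' 1 unfolding A_def by (auto intro: finite_subset)
    have psub: "X \<subset> X''" using X'' unfolding A_def by auto
    have fT: "finite {T. T \<subseteq> X'' \<and> X \<subseteq> T}"
      by (rule finite_subset[of _ "Pow X''"]) (use fX'' in auto)
    have cc: "card {x. x \<in> {T. T \<subseteq> X'' \<and> X \<subseteq> T} \<and> even (card x)} = card {x. x \<in> {T. T \<subseteq> X'' \<and> X \<subseteq> T} \<and> odd (card x)}"
    proof -
      have "{x. x \<in> {T. T \<subseteq> X'' \<and> X \<subseteq> T} \<and> even (card x)} = {T. T \<subseteq> X'' \<and> X \<subseteq> T \<and> even (card T)}" by auto
      moreover have "{x. x \<in> {T. T \<subseteq> X'' \<and> X \<subseteq> T} \<and> odd (card x)} = {T. T \<subseteq> X'' \<and> X \<subseteq> T \<and> odd (card T)}" by auto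
      ultimately show ?thesis using card_subsupersets_even_odd[OF fX'' psub] by simp
    qed
    have z: "(\<Sum>T\<in>{T. T \<subseteq> X'' \<and> X \<subseteq> T}. (-1::int)^card T) = 0"
      by (rule sum_alternating_cancels[OF fT cc])
    have fin2: "finite {X'. X' \<in> A \<and> X' \<subseteq> X''}" using finA by auto
    have split: "{T. T \<subseteq> X'' \<and> X \<subseteq> T} = insert X {X'. X' \<in> A \<and> X' \<subseteq> X''}"
      using psub X'' unfolding A_def by auto
    have nX: "X \<notin> {X'. X' \<in> A \<and> X' \<subseteq> X''}" unfolding A_def by auto
    have s: "(\<Sum>X'\<in>{X'. X' \<in> A \<and> X' \<subseteq> X''}. (-1::int)^card X') = - ((-1)^card X)"
      using z unfolding split sum.insert[OF fin2 nX] by simp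
    show "(\<Sum>X'\<in>{X'. X' \<in> A \<and> X' \<subseteq> X''}. if X'' \<in> C then (-1::int)^(card X'' + card X') else 0)
        = - (if X'' \<in> C then (-1::int)^(card X'' + card X) else 0)"
    proof (cases "X'' \<in> C")
      case True
      have "(\<Sum>X'\<in>{X'. X' \<in> A \<and> X' \<subseteq> X''}. (-1::int)^(card X'' + card X'))
          = (-1)^card X'' * (\<Sum>X'\<in>{X'. X' \<in> A \<and> X' \<subseteq> X''}. (-1::int)^card X')"
        by (simp add: power_add sum_distrib_left)
      then show ?thesis using True s by (simp add: power_add)
    qed simp
  qed
  finally have eq: "gen_mobius S C X = (if X \<in> C then 1 else 0) + (\<Sum>X''\<in>A. if X'' \<in> C then (-1::int)^(card X'' + card X) else 0)"
    by (simp add: sum_negf)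
  have split2: "{X'. X \<subseteq> X' \<and> X' \<subseteq> S} = insert X A" using 1 unfolding A_def by auto
  have "X \<notin> A" unfolding A_def by auto
  then show ?case unfolding split2 eq using finA
    by (simp add: sum.insert)
qed

lemma da_four:
  assumes "{a,b} \<in> dot_algebra F" "{b,c} \<in> dot_algebra F" "{c,d} \<in> dot_algebra F"
    "a \<noteq> b" "a \<noteq> c" "a \<noteq> d" "b \<noteq> c" "b \<noteq> d" "c \<noteq> d"
  shows "{a,d} \<in> dot_algebra F"
proof -
  have "{a,b} \<union> {c,d} \<in> dot_algebra F"
    by (rule dot_algebra.disj_union) (use assms in auto)
  then have "({a,b} \<union> {c,d}) - {b,c} \<in> dot_algebra F"
    by (rule dot_algebra.subset_diff[OF _ assms(2)]) auto
  moreover have "({a,b} \<union> {c,d}) - {b,c} = {a,d}" using assms by auto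
  ultimately show ?thesis by simp
qed

lemma da_fin:
  assumes "finite A" "\<And>x. x \<in> A \<Longrightarrow> {x} \<in> dot_algebra F"
  shows "A \<in> dot_algebra F"
  using assms
proof (induction A rule: finite_induct)
  case empty
  show ?case by (rule dot_algebra.empty)
next
  case (insert x A)
  have "{x} \<union> A \<in> dot_algebra F"
    by (rule dot_algebra.disj_union) (use insert in auto)
  then show ?case by simp
qed

lemma da_bal:
  assumes "finite A" "card {x\<in>A. P x} = card {x\<in>A. \<not> P x}"
    "\<And>x y. x \<in> A \<Longrightarrow> y \<in> A \<Longrightarrow> P x \<Longrightarrow> \<not> P y \<Longrightarrow> {x,y} \<in> dot_algebra F"
  shows "A \<in> dot_algebra F"
  using assms
proof (induction "card A" arbitrary: A rule: less_induct)
  case less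
  show ?case
  proof (cases "A = {}")
    case True
    then show ?thesis by (simp add: dot_algebra.empty)
  next
    case False
    have ne: "{x\<in>A. P x} \<noteq> {}"
    proof
      assume e: "{x\<in>A. P x} = {}"
      then have "card {x\<in>A. \<not> P x} = 0" using less.prems(2) by (metis card.empty)
      then have "{x\<in>A. \<not> P x} = {}" using less.prems(1) by simp
      with e False show False by auto
    qed
    then obtain e where e: "e \<in> A" "P e" by auto
    have "card {x\<in>A. P x} \<noteq> 0" using ne less.prems(1) by simp
    then have "card {x\<in>A. \<not> P x} \<noteq> 0" using less.prems(2) by simp
    then have "{x\<in>A. \<not> P x} \<noteq> {}" by (metis card.empty)
    then obtain q where q: "q \<in> A" "\<not> P q" by auto
    define A' where "A' = A - {e,q}"
    have eo: "e \<noteq> q" using e q by auto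
    have fA': "finite A'" using less.prems(1) unfolding A'_def by auto
    have c1: "{x\<in>A'. P x} = {x\<in>A. P x} - {e}" unfolding A'_def using q by auto
    have c2: "{x\<in>A'. \<not> P x} = {x\<in>A. \<not> P x} - {q}" unfolding A'_def using e by auto
    have "card {x\<in>A'. P x} = card {x\<in>A'. \<not> P x}"
      unfolding c1 c2 using e q less.prems(1,2) by (simp add: card_Diff_singleton)
    moreover have "card A' < card A" unfolding A'_def
      by (rule psubset_card_mono) (use e less.prems(1) in auto)
    ultimately have "A' \<in> dot_algebra F" using less.hyps[of A'] fA' less.prems(3) unfolding A'_def by auto
    moreover have "{e,q} \<in> dot_algebra F" using less.prems(3) e q by auto
    ultimately have "A' \<union> {e,q} \<in> dot_algebra F"
      by (rule dot_algebra.disj_union) (auto simp: A'_def)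
    moreover have "A' \<union> {e,q} = A" using e q unfolding A'_def by auto
    ultimately show ?thesis by simp
  qed
qed

locale setup6 =
  fixes S :: "'a set" and I :: "'a set set" and Z :: "'a set" and F :: "'a set set set"
  assumes fin: "finite S" and sub: "I \<subseteq> Pow S" and down: "\<And>X Y. X \<in> I \<Longrightarrow> Y \<subseteq> X \<Longrightarrow> Y \<in> I"
    and gen: "\<And>X. X \<in> I \<Longrightarrow> X \<noteq> Z \<Longrightarrow> Pow X \<in> dot_algebra F"
    and ZI: "Z \<in> I"
begin

lemma finI: "X \<in> I \<Longrightarrow> finite X"
  using sub fin by (auto intro: finite_subset)

lemma single: "X \<in> I \<Longrightarrow> \<not> Z \<subseteq> X \<Longrightarrow> {X} \<in> dot_algebra F"
proof (induction "card X" arbitrary: X rule: less_induct)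
  case less
  have fX: "finite X" using finI less.prems by simp
  have "Pow X - {X} \<in> dot_algebra F"
  proof (rule da_fin)
    show "finite (Pow X - {X})" using fX by simp
  next
    fix W assume W: "W \<in> Pow X - {X}"
    then have "W \<subset> X" by auto
    then have "card W < card X" using fX by (simp add: psubset_card_mono)
    moreover have "W \<in> I" using W less.prems down by auto
    moreover have "\<not> Z \<subseteq> W" using W less.prems by auto
    ultimately show "{W} \<in> dot_algebra F" using less.hyps by auto
  qed
  moreover have "Pow X \<in> dot_algebra F" using gen less.prems by auto
  ultimately have "Pow X - (Pow X - {X}) \<in> dot_algebra F"
    by (meson dot_algebra.subset_diff Diff_subset)
  moreover have "Pow X - (Pow X - {X}) = {X}" by auto
  ultimately show ?case by simp
qed

lemma lowpart: "X \<in> I \<Longrightarrow> {W\<in>Pow X. \<not> Z \<subseteq> W} \<in> dot_algebra F"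
  by (rule da_fin) (use finI down single in auto)

lemma ivZ: "X \<in> I \<Longrightarrow> Z \<subseteq> X \<Longrightarrow> X \<noteq> Z \<Longrightarrow> {W. Z \<subseteq> W \<and> W \<subseteq> X} \<in> dot_algebra F"
proof -
  assume a: "X \<in> I" "Z \<subseteq> X" "X \<noteq> Z"
  have "Pow X - {W\<in>Pow X. \<not> Z \<subseteq> W} \<in> dot_algebra F"
    by (rule dot_algebra.subset_diff) (use a gen lowpart in auto)
  moreover have "Pow X - {W\<in>Pow X. \<not> Z \<subseteq> W} = {W. Z \<subseteq> W \<and> W \<subseteq> X}" by auto
  ultimately show ?thesis by simp
qed

lemma iv: "Z \<subseteq> A \<Longrightarrow> A \<subset> X \<Longrightarrow> X \<in> I \<Longrightarrow> {W. A \<subseteq> W \<and> W \<subseteq> X} \<in> dot_algebra F"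
proof (induction "card (A - Z)" arbitrary: A X rule: less_induct)
  case less
  show ?case
  proof (cases "A = Z")
    case True
    then show ?thesis using ivZ less.prems by auto
  next
    case False
    then obtain v where v: "v \<in> A" "v \<notin> Z" using less.prems(1) by blast
    define A' where "A' = A - {v}"
    have ZA': "Z \<subseteq> A'" using less.prems v unfolding A'_def by auto
    have fA: "finite A" using finI less.prems by (meson finite_subset less_imp_le)
    have c: "card (A' - Z) < card (A - Z)"
    proof -
      have "A' - Z = (A - Z) - {v}" unfolding A'_def by auto
      moreover have "card ((A - Z) - {v}) < card (A - Z)" by (rule card_Diff1_less) (use v fA in auto)
      ultimately show ?thesis by simp
    qed
    have p1: "A' \<subset> X" using less.prems v unfolding A'_def by auto
    have p2: "A' \<subset> X - {v}"
    proof -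
      have "A' \<subseteq> X - {v}" using less.prems unfolding A'_def by auto
      moreover have "A' \<noteq> X - {v}"
      proof
        assume "A' = X - {v}"
        then have "A = X" using v less.prems unfolding A'_def by auto
        then show False using less.prems by auto
      qed
      ultimately show ?thesis by auto
    qed
    have XvI: "X - {v} \<in> I" using down less.prems by auto
    have h1: "{W. A' \<subseteq> W \<and> W \<subseteq> X} \<in> dot_algebra F"
      using less.hyps[OF c ZA' p1 less.prems(3)] .
    have h2: "{W. A' \<subseteq> W \<and> W \<subseteq> X - {v}} \<in> dot_algebra F"
      using less.hyps[OF c ZA' p2 XvI] .
    have "{W. A' \<subseteq> W \<and> W \<subseteq> X} - {W. A' \<subseteq> W \<and> W \<subseteq> X - {v}} \<in> dot_algebra F"
      by (rule dot_algebra.subset_diff[OF h1 h2]) auto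
    moreover have "{W. A' \<subseteq> W \<and> W \<subseteq> X} - {W. A' \<subseteq> W \<and> W \<subseteq> X - {v}} = {W. A \<subseteq> W \<and> W \<subseteq> X}"
      using v unfolding A'_def by auto
    ultimately show ?thesis by simp
  qed
qed

lemma edge: "X \<in> I \<Longrightarrow> v \<in> X \<Longrightarrow> Z \<subseteq> X - {v} \<Longrightarrow> {X - {v}, X} \<in> dot_algebra F"
proof -
  assume a: "X \<in> I" "v \<in> X" "Z \<subseteq> X - {v}"
  have "{W. X - {v} \<subseteq> W \<and> W \<subseteq> X} \<in> dot_algebra F"
    by (rule iv) (use a in auto)
  moreover have "{W. X - {v} \<subseteq> W \<and> W \<subseteq> X} = {X - {v}, X}"
  proof
    show "{W. X - {v} \<subseteq> W \<and> W \<subseteq> X} \<subseteq> {X - {v}, X}"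
    proof
      fix W assume "W \<in> {W. X - {v} \<subseteq> W \<and> W \<subseteq> X}"
      then show "W \<in> {X - {v}, X}"
        by (cases "v \<in> W") auto
    qed
  qed (use a in auto)
  ultimately show ?thesis by simp
qed

lemma oddZ: "X \<in> I \<Longrightarrow> Z \<subseteq> X \<Longrightarrow> odd (card X + card Z) \<Longrightarrow> {Z, X} \<in> dot_algebra F"
proof (induction "card X" arbitrary: X rule: less_induct)
  case less
  have fX: "finite X" using finI less.prems by simp
  have "X \<noteq> Z" using less.prems by auto
  then obtain v where v: "v \<in> X" "v \<notin> Z" using less.prems by blast
  define X1 where "X1 = X - {v}"
  have X1I: "X1 \<in> I" using down less.prems unfolding X1_def by auto
  have ZX1: "Z \<subseteq> X1" using less.prems v unfolding X1_def by auto
  have cX1: "card X1 = card X - 1" unfolding X1_def using v fX by simp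
  have cX: "card X > 0" using v fX card_gt_0_iff by blast
  have e1: "{X1, X} \<in> dot_algebra F" unfolding X1_def by (rule edge) (use less.prems v ZX1 X1_def in auto)
  show ?case
  proof (cases "X1 = Z")
    case True
    then show ?thesis using e1 by simp
  next
    case False
    then obtain w where w: "w \<in> X1" "w \<notin> Z" using ZX1 by blast
    define X2 where "X2 = X1 - {w}"
    have X2I: "X2 \<in> I" using down X1I unfolding X2_def by auto
    have ZX2: "Z \<subseteq> X2" using ZX1 w unfolding X2_def by auto
    have fX1: "finite X1" using fX unfolding X1_def by simp
    have cX2: "card X2 = card X1 - 1" unfolding X2_def using w fX1 by simp
    have cX1p: "card X1 > 0" using w fX1 card_gt_0_iff by blast
    have par: "odd (card X2 + card Z)" using less.prems(3) cX1 cX2 cX cX1p by (simp; presburger)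
    have ih: "{Z, X2} \<in> dot_algebra F"
      using less.hyps[OF _ X2I ZX2 par] cX2 cX1 cX cX1p by simp
    have e2: "{X2, X1} \<in> dot_algebra F" unfolding X2_def by (rule edge) (use X1I w ZX2 X2_def in auto)
    have d1: "X \<noteq> X1" "X1 \<noteq> X2" "X \<noteq> X2" "X \<noteq> Z" "X1 \<noteq> Z"
      using v w unfolding X1_def X2_def by auto
    have d2: "X2 \<noteq> Z" using par by auto
    have e1': "{X, X1} \<in> dot_algebra F" using e1 by (metis insert_commute)
    have e2': "{X1, X2} \<in> dot_algebra F" using e2 by (metis insert_commute)
    have ih': "{X2, Z} \<in> dot_algebra F" using ih by (metis insert_commute)
    have "{X, Z} \<in> dot_algebra F"
      by (rule da_four[OF e1' e2' ih']) (use d1 d2 in auto)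
    then show ?thesis by (metis insert_commute)
  qed
qed

lemma pair:
  assumes "X \<in> I" "Y \<in> I" "Z \<subseteq> X" "Z \<subseteq> Y" "odd (card X + card Z)" "even (card Y + card Z)"
  shows "{X, Y} \<in> dot_algebra F"
proof (cases "Y = Z")
  case True
  then show ?thesis using oddZ assms by (metis insert_commute)
next
  case False
  then obtain v where v: "v \<in> Y" "v \<notin> Z" using assms by blast
  define X' where "X' = Y - {v}"
  have fY: "finite Y" using finI assms by simp
  have cY: "card Y > 0" using v fY card_gt_0_iff by blast
  have cX': "card X' = card Y - 1" unfolding X'_def using v fY by simp
  have X'I: "X' \<in> I" using down assms unfolding X'_def by auto
  have ZX': "Z \<subseteq> X'" using assms v unfolding X'_def by auto
  have par: "odd (card X' + card Z)" using assms(6) cX' cY by (simp; presburger)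
  have e: "{X', Y} \<in> dot_algebra F" unfolding X'_def by (rule edge) (use assms v ZX' X'_def in auto)
  show ?thesis
  proof (cases "X = X'")
    case True
    then show ?thesis using e by simp
  next
    case False
    have a1: "{X, Z} \<in> dot_algebra F" using oddZ assms by (metis insert_commute)
    have a2: "{Z, X'} \<in> dot_algebra F" using oddZ X'I ZX' par by simp
    have d: "X \<noteq> Z" "X \<noteq> Y" "Z \<noteq> X'" "X' \<noteq> Y"
      using assms par v unfolding X'_def by auto
    show ?thesis
      by (rule da_four[OF a1 a2 e]) (use d False \<open>Y \<noteq> Z\<close> in auto)
  qed
qed

end

theorem theorem6p2:
  fixes S :: "'a set" and I :: "'a set set" and Z :: "'a set"
  assumes "finite S"
    and "I \<subseteq> Pow S"
    and "\<And>X Y. X \<in> I \<Longrightarrow> Y \<subseteq> X \<Longrightarrow> Y \<in> I"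
    and "Z \<in> I"
    and "gen_mobius S I Z = 0"
  shows "I \<in> dot_algebra {{Y. Y \<subseteq> S \<and> Y \<subseteq> X} | X. X \<in> I - {Z}}"
proof -
  define G where "G = {{Y. Y \<subseteq> S \<and> Y \<subseteq> X} | X. X \<in> I - {Z}}"
  interpret s: setup6 S I Z G
  proof
    fix X assume X: "X \<in> I" "X \<noteq> Z"
    have "Pow X = {Y. Y \<subseteq> S \<and> Y \<subseteq> X}" using X assms(2) by auto
    then have "Pow X \<in> G" unfolding G_def using X by auto
    then show "Pow X \<in> dot_algebra G" by (rule dot_algebra.gen)
  qed (use assms in auto)
  have finI: "finite I" using assms(1,2) by (auto intro: finite_subset)
  have I0: "{X\<in>I. \<not> Z \<subseteq> X} \<in> dot_algebra G"
    by (rule da_fin) (use finI s.single in auto)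
  define U where "U = {X\<in>I. Z \<subseteq> X}"
  have finU: "finite U" using finI unfolding U_def by auto
  have ZS: "Z \<subseteq> S" using assms(2,4) by auto
  have "gen_mobius S I Z = (\<Sum>X'\<in>{X'. Z \<subseteq> X' \<and> X' \<subseteq> S}. if X' \<in> I then (-1::int)^(card X' + card Z) else 0)"
    by (rule mob_formula[OF assms(1) ZS])
  also have "\<dots> = (\<Sum>X'\<in>U. (-1::int)^(card X' + card Z))"
  proof -
    have fin: "finite {X'. Z \<subseteq> X' \<and> X' \<subseteq> S}"
      by (rule finite_subset[of _ "Pow S"]) (use assms(1) in auto)
    have "(\<Sum>X'\<in>{X'. Z \<subseteq> X' \<and> X' \<subseteq> S}. if X' \<in> I then (-1::int)^(card X' + card Z) else 0)
        = (\<Sum>X'\<in>{X'. Z \<subseteq> X' \<and> X' \<subseteq> S} \<inter> {X'. X' \<in> I}. (-1::int)^(card X' + card Z))"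
      using fin by (simp add: sum.inter_restrict)
    moreover have "{X'. Z \<subseteq> X' \<and> X' \<subseteq> S} \<inter> {X'. X' \<in> I} = U"
      unfolding U_def using assms(2) by auto
    ultimately show ?thesis by simp
  qed
  also have "\<dots> = (\<Sum>X'\<in>U. if even (card X' + card Z) then 1 else -1)"
    by (rule sum.cong) auto
  also have "\<dots> = int (card {x\<in>U. even (card x + card Z)}) - int (card {x\<in>U. \<not> even (card x + card Z)})"
  proof -
    have "(\<Sum>X'\<in>U. if even (card X' + card Z) then (1::int) else -1)
        = (\<Sum>X'\<in>{x\<in>U. even (card x + card Z)}. 1) + (\<Sum>X'\<in>{x\<in>U. \<not> even (card x + card Z)}. -1)"
      using finU by (simp add: sum.If_cases Int_def)
    then show ?thesis by simp
  qed
  finally have bal: "card {x\<in>U. odd (card x + card Z)} = card {x\<in>U. \<not> odd (card x + card Z)}"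
    using assms(5) by simp
  have Ud: "U \<in> dot_algebra G"
  proof (rule da_bal[OF finU bal])
    fix x y assume "x \<in> U" "y \<in> U" "odd (card x + card Z)" "\<not> odd (card y + card Z)"
    then show "{x, y} \<in> dot_algebra G" using s.pair unfolding U_def by auto
  qed
  have "{X\<in>I. \<not> Z \<subseteq> X} \<union> U \<in> dot_algebra G"
    by (rule dot_algebra.disj_union[OF I0 Ud]) (auto simp: U_def)
  moreover have "{X\<in>I. \<not> Z \<subseteq> X} \<union> U = I" unfolding U_def by auto
  ultimately show ?thesis unfolding G_def by simp
qed

end
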